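(* Let $\xi$ and $\chi$ be $\mu$-calculus formulas such that $\xi$ is free for $x$ in $\chi$, $x\in\mathrm{FV}(\chi)$, $|\xi|>1$, and $\chi[\xi/x]$ is tidy. Then there are a tidy formula $\chi'$ and a variable $x'$ such that $\xi$ is free for $x'$ in $\chi'$, $\chi'[\xi/x']=\chi[\xi/x]$, $|\chi'|\le|\chi|$, $\mathit{ad}_\eta(\chi')\le\mathit{ad}_\eta(\chi)$ for both $\eta\in\{\mu,\nu\}$, and $\xi\not\trianglelefteq_f\chi'$.
   Context: Syntax. Formulas of the modal $\mu$-calculus are taken in negation normal form: $\phi ::= \top \mid \bot \mid p \mid \neg p \mid x \mid \phi\land\phi\mid\phi\lor\phi\mid\Diamond\phi\mid\Box\phi\mid\mu x.\phi\mid\nu x.\phi$, where $p$ ranges over proposition letters and $x$ over an infinite supply of variables (which occur only positively). The formulas $\top,\bot,p,\neg p,x$ are atomic. $\mathrm{FV}(\phi)$ and $\mathrm{BV}(\phi)$ are the sets of free and bound variables of $\phi$; $\phi$ is tidy if $\mathrm{FV}(\phi)\cap\mathrm{BV}(\phi)=\varnothing$. $\bar\eta$ denotes the fixpoint operator other than $\eta\in\{\mu,\nu\}$. $\chi[\xi/x]$ is the result of replacing every free occurrence of $x$ in $\chi$ by $\xi$; $\xi$ is free for $x$ in $\chi$ if no free variable of $\xi$ becomes bound in $\chi[\xi/x]$. $|\phi|$ is the length of $\phi$ (number of nodes of its syntax tree). Free subformulas. $\phi\trianglelefteq_f\psi$ iff $\psi=\chi[\phi/y]$ for some formula $\chi$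 and variable $y$ with $y\in\mathrm{FV}(\chi)$ and $\phi$ free for $y$ in $\chi$. Alternation hierarchy. The classes $\mathrm{AH}_\eta(n)$ ($\eta\in\{\mu,\nu\}$, $n\in\omega$) are the least classes such that: (1) all atomic formulas belong to $\mathrm{AH}_\eta(0)$; (2) each $\mathrm{AH}_\eta(n)$ is closed under $\land,\lor,\Diamond,\Box$; (3) if $\chi\in\mathrm{AH}_\eta(n)$ then $\bar\eta x.\chi\in\mathrm{AH}_\eta(n)$; (4) if $\chi,\xi\in\mathrm{AH}_\eta(n)$ and $\xi$ is free for $x$ in $\chi$ then $\chi[\xi/x]\in\mathrm{AH}_\eta(n)$; (5) $\mathrm{AH}_\mu(n)\cup\mathrm{AH}_\nu(n)\subseteq\mathrm{AH}_\eta(n+1)$. $\mathit{ad}_\eta(\xi)$ is the least $k$ with $\xi\in\mathrm{AH}_\eta(k)$. *)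

theory Defs
  imports Main
begin

text \<open>Modal mu-calculus formulas in negation normal form; proposition letters of type 'p,
  variables drawn from the infinite supply nat.\<close>

datatype 'p fm =
    Top | Bot | Prop 'p | NProp 'p | Var nat
  | And "'p fm" "'p fm" | Or "'p fm" "'p fm"
  | Dia "'p fm" | Box "'p fm"
  | Mu nat "'p fm" | Nu nat "'p fm"

datatype fp = MuOp | NuOp

fun dual :: "fp \<Rightarrow> fp" where
  "dual MuOp = NuOp" | "dual NuOp = MuOp"

fun fpbind :: "fp \<Rightarrow> nat \<Rightarrow> 'p fm \<Rightarrow> 'p fm" where
  "fpbind MuOp x f = Mu x f" | "fpbind NuOp x f = Nu x f"

fun atomic :: "'p fm \<Rightarrow> bool" where
  "atomic Top = True" | "atomic Bot = True" | "atomic (Prop p) = True"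
| "atomic (NProp p) = True" | "atomic (Var x) = True" | "atomic _ = False"

fun FV :: "'p fm \<Rightarrow> nat set" where
  "FV Top = {}" | "FV Bot = {}" | "FV (Prop p) = {}" | "FV (NProp p) = {}"
| "FV (Var x) = {x}"
| "FV (And a b) = FV a \<union> FV b" | "FV (Or a b) = FV a \<union> FV b"
| "FV (Dia a) = FV a" | "FV (Box a) = FV a"
| "FV (Mu x a) = FV a - {x}" | "FV (Nu x a) = FV a - {x}"

fun BV :: "'p fm \<Rightarrow> nat set" where
  "BV Top = {}" | "BV Bot = {}" | "BV (Prop p) = {}" | "BV (NProp p) = {}"
| "BV (Var x) = {}"
| "BV (And a b) = BV a \<union> BV b" | "BV (Or a b) = BV a \<union> BV b"
| "BV (Dia a) = BV a" | "BV (Box a) = BV a"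
| "BV (Mu x a) = insert x (BV a)" | "BV (Nu x a) = insert x (BV a)"

definition tidy :: "'p fm \<Rightarrow> bool" where
  "tidy f \<longleftrightarrow> FV f \<inter> BV f = {}"

text \<open>subst c x e = c[e/x]: replace every free occurrence of x in c by e (no renaming).\<close>
fun subst :: "'p fm \<Rightarrow> nat \<Rightarrow> 'p fm \<Rightarrow> 'p fm" where
  "subst Top x e = Top" | "subst Bot x e = Bot" | "subst (Prop p) x e = Prop p"
| "subst (NProp p) x e = NProp p"
| "subst (Var y) x e = (if y = x then e else Var y)"
| "subst (And a b) x e = And (subst a x e) (subst b x e)"
| "subst (Or a b) x e = Or (subst a x e) (subst b x e)"
| "subst (Dia a) x e = Dia (subst a x e)"
| "subst (Box a) x e = Box (subst a x e)"
| "subst (Mu y a) x e = (if y = x then Mu y a else Mu y (subst a x e))"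
| "subst (Nu y a) x e = (if y = x then Nu y a else Nu y (subst a x e))"

text \<open>freefor e x c: no free variable of e becomes bound in c[e/x], i.e. no free occurrence
  of x in c lies in the scope of a fpbind for a free variable of e.\<close>
fun freefor :: "'p fm \<Rightarrow> nat \<Rightarrow> 'p fm \<Rightarrow> bool" where
  "freefor e x Top = True" | "freefor e x Bot = True" | "freefor e x (Prop p) = True"
| "freefor e x (NProp p) = True" | "freefor e x (Var y) = True"
| "freefor e x (And a b) = (freefor e x a \<and> freefor e x b)"
| "freefor e x (Or a b) = (freefor e x a \<and> freefor e x b)"
| "freefor e x (Dia a) = freefor e x a"
| "freefor e x (Box a) = freefor e x a"
| "freefor e x (Mu y a) = (x \<notin> FV (Mu y a) \<or> (y \<notin> FV e \<and> freefor e x a))"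
| "freefor e x (Nu y a) = (x \<notin> FV (Nu y a) \<or> (y \<notin> FV e \<and> freefor e x a))"

fun len :: "'p fm \<Rightarrow> nat" where
  "len Top = 1" | "len Bot = 1" | "len (Prop p) = 1" | "len (NProp p) = 1" | "len (Var x) = 1"
| "len (And a b) = 1 + len a + len b" | "len (Or a b) = 1 + len a + len b"
| "len (Dia a) = 1 + len a" | "len (Box a) = 1 + len a"
| "len (Mu x a) = 1 + len a" | "len (Nu x a) = 1 + len a"

definition free_sub :: "'p fm \<Rightarrow> 'p fm \<Rightarrow> bool" where
  "free_sub f g \<longleftrightarrow> (\<exists>c y. g = subst c y f \<and> y \<in> FV c \<and> freefor f y c)"

inductive AH :: "fp \<Rightarrow> nat \<Rightarrow> 'p fm \<Rightarrow> bool" where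
  atom: "atomic f \<Longrightarrow> AH eta 0 f"
| conj: "AH eta n a \<Longrightarrow> AH eta n b \<Longrightarrow> AH eta n (And a b)"
| disj: "AH eta n a \<Longrightarrow> AH eta n b \<Longrightarrow> AH eta n (Or a b)"
| dia: "AH eta n a \<Longrightarrow> AH eta n (Dia a)"
| box: "AH eta n a \<Longrightarrow> AH eta n (Box a)"
| fix_dual: "AH eta n c \<Longrightarrow> AH eta n (fpbind (dual eta) x c)"
| sub: "AH eta n c \<Longrightarrow> AH eta n e \<Longrightarrow> freefor e x c \<Longrightarrow> AH eta n (subst c x e)"
| up: "AH eta' n f \<Longrightarrow> AH eta (Suc n) f"

definition ad :: "fp \<Rightarrow> 'p fm \<Rightarrow> nat" where
  "ad eta f = (LEAST k. AH eta k f)"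

end

theory Submission
  imports Defs
begin

fun repl :: "'p fm \<Rightarrow> bool list \<Rightarrow> 'p fm \<Rightarrow> 'p fm" where
  "repl f [] t = t"
| "repl (And a b) (d#p) t = (if d then And a (repl b p t) else And (repl a p t) b)"
| "repl (Or a b) (d#p) t = (if d then Or a (repl b p t) else Or (repl a p t) b)"
| "repl (Dia a) (d#p) t = Dia (repl a p t)"
| "repl (Box a) (d#p) t = Box (repl a p t)"
| "repl (Mu x a) (d#p) t = Mu x (repl a p t)"
| "repl (Nu x a) (d#p) t = Nu x (repl a p t)"
| "repl f (d#p) t = f"

lemma fin_FV: "finite (FV f)" by (induction f) auto
lemma fin_BV: "finite (BV f)" by (induction f) auto

lemma subst_nofv: "x \<notin> FV c \<Longrightarrow> subst c x e = c"
  by (induction c) auto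

lemma freefor_nofv: "x \<notin> FV c \<Longrightarrow> freefor e x c"
  by (induction c) auto

lemma freefor_disj: "FV e \<inter> BV c = {} \<Longrightarrow> freefor e x c"
  by (induction c) auto

lemma BV_subst1: "BV c \<subseteq> BV (subst c y e)"
  by (induction c) auto
lemma BV_subst2: "y \<in> FV c \<Longrightarrow> BV e \<subseteq> BV (subst c y e)"
  by (induction c) auto
lemma BV_subst3: "BV (subst c y e) \<subseteq> BV c \<union> BV e"
  by (induction c) auto
lemma FV_subst: "FV (subst c y e) \<subseteq> FV c \<union> FV e"
  by (induction c) auto
lemma FV_subst2: "y \<in> FV c \<Longrightarrow> freefor e y c \<Longrightarrow> FV e \<subseteq> FV (subst c y e)"
  by (induction c) auto

lemma FV_repl: "FV (repl f p t) \<subseteq> FV f \<union> FV t"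
  by (induction f p t rule: repl.induct) auto
lemma BV_repl: "BV (repl f p t) \<subseteq> BV f \<union> BV t"
  by (induction f p t rule: repl.induct) auto

lemma rename: "w \<notin> FV f \<Longrightarrow> w \<notin> BV f \<Longrightarrow> subst (repl f p (Var w)) w t = repl f p t"
  by (induction f arbitrary: p) (case_tac p; auto simp: subst_nofv)+

lemma FF1: "freefor e y c \<Longrightarrow> w \<noteq> y \<Longrightarrow> freefor e y (repl c q (Var w))"
  by (induction c arbitrary: q) (case_tac q; auto dest: FV_repl[THEN subsetD])+

lemma AH_var: "AH eta n (Var z)"
  by (induction n arbitrary: eta) (auto intro: AH.atom AH.up)


lemma Dnofv: "y \<notin> FV c \<Longrightarrow> w \<noteq> y \<Longrightarrow> repl (subst c y e) p (Var w) = subst (repl c p (Var w)) y e"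
proof -
  assume a: "y \<notin> FV c" "w \<noteq> y"
  hence "y \<notin> FV (repl c p (Var w))" using FV_repl[of c p "Var w"] by auto
  thus ?thesis using a by (simp add: subst_nofv)
qed

definition DC :: "'p fm \<Rightarrow> nat \<Rightarrow> 'p fm \<Rightarrow> bool list \<Rightarrow> nat \<Rightarrow> nat \<Rightarrow> bool" where
  "DC c y e p w u \<longleftrightarrow> (\<exists>q. repl (subst c y e) p (Var w) = subst (repl c q (Var w)) y e) \<or>
     (\<exists>q r. repl (subst c y e) p (Var w) = subst (subst (repl c q (Var u)) y e) u (repl e r (Var w))
        \<and> freefor (repl e r (Var w)) u (subst (repl c q (Var u)) y e))"

lemma DC_nofv: "y \<notin> FV c \<Longrightarrow> w \<noteq> y \<Longrightarrow> DC c y e p w u"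
  unfolding DC_def using Dnofv by blast

lemma D:
  assumes "freefor e y c" "w \<notin> BV c" "w \<noteq> y" "u \<notin> FV c" "u \<notin> BV c" "u \<notin> FV e" "u \<noteq> y"
  shows "DC c y e p w u"
  using assms
proof (induction c arbitrary: p)
  case (Var v)
  show ?case
  proof (cases "v = y")
    case True
    show ?thesis unfolding DC_def
      by (intro disjI2 exI[of _ "[]"] exI[of _ p]) (use True Var in simp)
  next
    case False
    then show ?thesis unfolding DC_def using Dnofv[of y "Var v" w e p] Var by auto
  qed
next
  case (And a b)
  show ?case
  proof (cases "y \<in> FV (And a b)")
    case False
    then show ?thesis unfolding DC_def using Dnofv[of y "And a b" w e p] And by blast
  next
    case True
    hence fa: "freefor e y a" and fb: "freefor e y b" using And by auto
    have ua: "u \<notin> FV (subst a y e)" "u \<notin> FV (subst b y e)"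
      using FV_subst[of a y e] FV_subst[of b y e] And by auto
    show ?thesis
    proof (cases p)
      case Nil then show ?thesis unfolding DC_def by (intro disjI1 exI[of _ "[]"]) (simp add: Nil And.prems)
    next
      case (Cons d p')
      show ?thesis
      proof (cases d)
        case True
        have "DC b y e p' w u" using And.IH(2) fb And.prems by auto
        from this[unfolded DC_def] show ?thesis
        proof (elim disjE exE conjE)
          fix q assume q: "repl (subst b y e) p' (Var w) = subst (repl b q (Var w)) y e"
          show ?thesis unfolding DC_def by (intro disjI1 exI[of _ "True#q"]) (simp add: Cons True q)
        next
          fix q r assume q: "repl (subst b y e) p' (Var w) = subst (subst (repl b q (Var u)) y e) u (repl e r (Var w))"
            and ff: "freefor (repl e r (Var w)) u (subst (repl b q (Var u)) y e)"
          show ?thesis unfolding DC_def by (intro disjI2 exI[of _ "True#q"] exI[of _ r])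
              (simp add: Cons True q ff subst_nofv freefor_nofv ua)
        qed
      next
        case False
        have "DC a y e p' w u" using And.IH(1) fa And.prems by auto
        from this[unfolded DC_def] show ?thesis
        proof (elim disjE exE conjE)
          fix q assume q: "repl (subst a y e) p' (Var w) = subst (repl a q (Var w)) y e"
          show ?thesis unfolding DC_def by (intro disjI1 exI[of _ "False#q"]) (simp add: Cons False q)
        next
          fix q r assume q: "repl (subst a y e) p' (Var w) = subst (subst (repl a q (Var u)) y e) u (repl e r (Var w))"
            and ff: "freefor (repl e r (Var w)) u (subst (repl a q (Var u)) y e)"
          show ?thesis unfolding DC_def by (intro disjI2 exI[of _ "False#q"] exI[of _ r])
              (simp add: Cons False q ff subst_nofv freefor_nofv ua)
        qed
      qed
    qed
  qed
next
  case (Or a b)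
  show ?case
  proof (cases "y \<in> FV (Or a b)")
    case False
    then show ?thesis unfolding DC_def using Dnofv[of y "Or a b" w e p] Or by blast
  next
    case True
    hence fa: "freefor e y a" and fb: "freefor e y b" using Or by auto
    have ua: "u \<notin> FV (subst a y e)" "u \<notin> FV (subst b y e)"
      using FV_subst[of a y e] FV_subst[of b y e] Or by auto
    show ?thesis
    proof (cases p)
      case Nil then show ?thesis unfolding DC_def by (intro disjI1 exI[of _ "[]"]) (simp add: Nil Or.prems)
    next
      case (Cons d p')
      show ?thesis
      proof (cases d)
        case True
        have "DC b y e p' w u" using Or.IH(2) fb Or.prems by auto
        from this[unfolded DC_def] show ?thesis
        proof (elim disjE exE conjE)
          fix q assume q: "repl (subst b y e) p' (Var w) = subst (repl b q (Var w)) y e"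
          show ?thesis unfolding DC_def by (intro disjI1 exI[of _ "True#q"]) (simp add: Cons True q)
        next
          fix q r assume q: "repl (subst b y e) p' (Var w) = subst (subst (repl b q (Var u)) y e) u (repl e r (Var w))"
            and ff: "freefor (repl e r (Var w)) u (subst (repl b q (Var u)) y e)"
          show ?thesis unfolding DC_def by (intro disjI2 exI[of _ "True#q"] exI[of _ r])
              (simp add: Cons True q ff subst_nofv freefor_nofv ua)
        qed
      next
        case False
        have "DC a y e p' w u" using Or.IH(1) fa Or.prems by auto
        from this[unfolded DC_def] show ?thesis
        proof (elim disjE exE conjE)
          fix q assume q: "repl (subst a y e) p' (Var w) = subst (repl a q (Var w)) y e"
          show ?thesis unfolding DC_def by (intro disjI1 exI[of _ "False#q"]) (simp add: Cons False q)
        next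
          fix q r assume q: "repl (subst a y e) p' (Var w) = subst (subst (repl a q (Var u)) y e) u (repl e r (Var w))"
            and ff: "freefor (repl e r (Var w)) u (subst (repl a q (Var u)) y e)"
          show ?thesis unfolding DC_def by (intro disjI2 exI[of _ "False#q"] exI[of _ r])
              (simp add: Cons False q ff subst_nofv freefor_nofv ua)
        qed
      qed
    qed
  qed
next
  case (Dia a)
  show ?case
  proof (cases "y \<in> FV (Dia a)")
    case False
    then show ?thesis unfolding DC_def using Dnofv[of y "Dia a" w e p] Dia by blast
  next
    case True
    hence fa: "freefor e y a" using Dia by auto
    show ?thesis
    proof (cases p)
      case Nil then show ?thesis unfolding DC_def by (intro disjI1 exI[of _ "[]"]) (simp add: Nil Dia.prems)
    next
      case (Cons d p')
      have "DC a y e p' w u" using Dia.IH fa Dia.prems by auto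
      from this[unfolded DC_def] show ?thesis
      proof (elim disjE exE conjE)
        fix q assume q: "repl (subst a y e) p' (Var w) = subst (repl a q (Var w)) y e"
        show ?thesis unfolding DC_def by (intro disjI1 exI[of _ "False#q"]) (simp add: Cons q)
      next
        fix q r assume q: "repl (subst a y e) p' (Var w) = subst (subst (repl a q (Var u)) y e) u (repl e r (Var w))"
          and ff: "freefor (repl e r (Var w)) u (subst (repl a q (Var u)) y e)"
        show ?thesis unfolding DC_def by (intro disjI2 exI[of _ "False#q"] exI[of _ r])
            (simp add: Cons q ff)
      qed
    qed
  qed
next
  case (Box a)
  show ?case
  proof (cases "y \<in> FV (Box a)")
    case False
    then show ?thesis unfolding DC_def using Dnofv[of y "Box a" w e p] Box by blast
  next
    case True
    hence fa: "freefor e y a" using Box by auto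
    show ?thesis
    proof (cases p)
      case Nil then show ?thesis unfolding DC_def by (intro disjI1 exI[of _ "[]"]) (simp add: Nil Box.prems)
    next
      case (Cons d p')
      have "DC a y e p' w u" using Box.IH fa Box.prems by auto
      from this[unfolded DC_def] show ?thesis
      proof (elim disjE exE conjE)
        fix q assume q: "repl (subst a y e) p' (Var w) = subst (repl a q (Var w)) y e"
        show ?thesis unfolding DC_def by (intro disjI1 exI[of _ "False#q"]) (simp add: Cons q)
      next
        fix q r assume q: "repl (subst a y e) p' (Var w) = subst (subst (repl a q (Var u)) y e) u (repl e r (Var w))"
          and ff: "freefor (repl e r (Var w)) u (subst (repl a q (Var u)) y e)"
        show ?thesis unfolding DC_def by (intro disjI2 exI[of _ "False#q"] exI[of _ r])
            (simp add: Cons q ff)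
      qed
    qed
  qed
next
  case (Mu x a)
  show ?case
  proof (cases "y \<in> FV (Mu x a)")
    case False
    then show ?thesis unfolding DC_def using Dnofv[of y "Mu x a" w e p] Mu by blast
  next
    case True
    hence fa: "freefor e y a" and xy: "x \<noteq> y" "x \<notin> FV e" using Mu by auto
    have xu: "x \<noteq> u" "x \<noteq> w" using Mu by auto
    show ?thesis
    proof (cases p)
      case Nil then show ?thesis unfolding DC_def by (intro disjI1 exI[of _ "[]"]) (simp add: Nil Mu.prems)
    next
      case (Cons d p')
      have "DC a y e p' w u" using Mu.IH fa Mu.prems by auto
      from this[unfolded DC_def] show ?thesis
      proof (elim disjE exE conjE)
        fix q assume q: "repl (subst a y e) p' (Var w) = subst (repl a q (Var w)) y e"
        show ?thesis unfolding DC_def by (intro disjI1 exI[of _ "False#q"]) (simp add: Cons q xy)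
      next
        fix q r assume q: "repl (subst a y e) p' (Var w) = subst (subst (repl a q (Var u)) y e) u (repl e r (Var w))"
          and ff: "freefor (repl e r (Var w)) u (subst (repl a q (Var u)) y e)"
        have "x \<notin> FV (repl e r (Var w))" using FV_repl[of e r "Var w"] xy xu by auto
        then show ?thesis unfolding DC_def by (intro disjI2 exI[of _ "False#q"] exI[of _ r])
            (simp add: Cons q ff xy xu)
      qed
    qed
  qed
next
  case (Nu x a)
  show ?case
  proof (cases "y \<in> FV (Nu x a)")
    case False
    then show ?thesis unfolding DC_def using Dnofv[of y "Nu x a" w e p] Nu by blast
  next
    case True
    hence fa: "freefor e y a" and xy: "x \<noteq> y" "x \<notin> FV e" using Nu by auto
    have xu: "x \<noteq> u" "x \<noteq> w" using Nu by auto
    show ?thesis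
    proof (cases p)
      case Nil then show ?thesis unfolding DC_def by (intro disjI1 exI[of _ "[]"]) (simp add: Nil Nu.prems)
    next
      case (Cons d p')
      have "DC a y e p' w u" using Nu.IH fa Nu.prems by auto
      from this[unfolded DC_def] show ?thesis
      proof (elim disjE exE conjE)
        fix q assume q: "repl (subst a y e) p' (Var w) = subst (repl a q (Var w)) y e"
        show ?thesis unfolding DC_def by (intro disjI1 exI[of _ "False#q"]) (simp add: Cons q xy)
      next
        fix q r assume q: "repl (subst a y e) p' (Var w) = subst (subst (repl a q (Var u)) y e) u (repl e r (Var w))"
          and ff: "freefor (repl e r (Var w)) u (subst (repl a q (Var u)) y e)"
        have "x \<notin> FV (repl e r (Var w))" using FV_repl[of e r "Var w"] xy xu by auto
        then show ?thesis unfolding DC_def by (intro disjI2 exI[of _ "False#q"] exI[of _ r])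
            (simp add: Cons q ff xy xu)
      qed
    qed
  qed
qed (auto intro: DC_nofv)


lemma repl_atomic: "atomic f \<Longrightarrow> repl f p t = (if p = [] then t else f)"
  by (cases f; cases p) auto

lemma fpbind_repl: "repl (fpbind k x c) (d#p) t = fpbind k x (repl c p t)"
  by (cases k) auto
lemma fpbind_BV: "BV (fpbind k x c) = insert x (BV c)"
  by (cases k) auto

lemma M: "AH eta n f \<Longrightarrow> z \<notin> BV f \<Longrightarrow> AH eta n (repl f p (Var z))"
proof (induction arbitrary: p z rule: AH.induct)
  case (atom f eta)
  then show ?case by (auto simp: repl_atomic intro: AH.atom AH_var)
next
  case (conj eta n a b)
  show ?case
  proof (cases p)
    case Nil then show ?thesis by (simp add: AH_var)
  next
    case (Cons d p') then show ?thesis using conj by (cases d) (auto intro!: AH.conj)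
  qed
next
  case (disj eta n a b)
  show ?case
  proof (cases p)
    case Nil then show ?thesis by (simp add: AH_var)
  next
    case (Cons d p') then show ?thesis using disj by (cases d) (auto intro!: AH.disj)
  qed
next
  case (dia eta n a)
  show ?case
  proof (cases p)
    case Nil then show ?thesis by (simp add: AH_var)
  next
    case (Cons d p') then show ?thesis using dia by (auto intro!: AH.dia)
  qed
next
  case (box eta n a)
  show ?case
  proof (cases p)
    case Nil then show ?thesis by (simp add: AH_var)
  next
    case (Cons d p') then show ?thesis using box by (auto intro!: AH.box)
  qed
next
  case (fix_dual eta n c x)
  show ?case
  proof (cases p)
    case Nil then show ?thesis by (simp add: AH_var)
  next
    case (Cons d p') then show ?thesis using fix_dual
      by (auto simp: fpbind_repl fpbind_BV intro!: AH.fix_dual)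
  qed
next
  case (up eta' n f eta)
  then show ?case by (auto intro: AH.up)
next
  case (sub eta n c e y)
  show ?case
  proof (cases "y \<in> FV c")
    case False
    then show ?thesis using sub by (simp add: subst_nofv)
  next
    case True
    have zc: "z \<notin> BV c" "z \<notin> BV e" using sub.prems BV_subst1[of c y e] BV_subst2[OF True, of e] by auto
    let ?V = "FV c \<union> BV c \<union> FV e \<union> BV e \<union> {y, z}"
    have finV: "finite ?V" by (simp add: fin_FV fin_BV)
    obtain w where w: "w \<notin> ?V" using ex_new_if_finite[OF infinite_UNIV_nat finV] by blast
    have finV2: "finite (insert w ?V)" using finV by simp
    obtain u where u: "u \<notin> insert w ?V" using ex_new_if_finite[OF infinite_UNIV_nat finV2] by blast
    have DC: "DC c y e p w u" by (rule D) (use sub.hyps w u in auto)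
    have key: "AH eta n (repl (subst c y e) p (Var w))"
      using DC unfolding DC_def
    proof (elim disjE exE conjE)
      fix q assume q: "repl (subst c y e) p (Var w) = subst (repl c q (Var w)) y e"
      have "AH eta n (repl c q (Var w))" using sub.IH(1) w by auto
      moreover have "freefor e y (repl c q (Var w))" using FF1 sub.hyps w by auto
      ultimately show ?thesis unfolding q using sub.hyps by (auto intro: AH.sub)
    next
      fix q r assume q: "repl (subst c y e) p (Var w) = subst (subst (repl c q (Var u)) y e) u (repl e r (Var w))"
        and ff: "freefor (repl e r (Var w)) u (subst (repl c q (Var u)) y e)"
      have "AH eta n (repl c q (Var u))" using sub.IH(1) u by auto
      moreover have "freefor e y (repl c q (Var u))" using FF1 sub.hyps u by auto
      ultimately have "AH eta n (subst (repl c q (Var u)) y e)" using sub.hyps by (auto intro: AH.sub)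
      moreover have "AH eta n (repl e r (Var w))" using sub.IH(2) w by auto
      ultimately show ?thesis unfolding q using ff by (auto intro: AH.sub)
    qed
    have wf: "w \<notin> FV (subst c y e)" "w \<notin> BV (subst c y e)"
      using w FV_subst[of c y e] BV_subst3[of c y e] by auto
    have eq: "repl (subst c y e) p (Var z) = subst (repl (subst c y e) p (Var w)) w (Var z)"
      using rename[OF wf] by simp
    have ff: "freefor (Var z) w (repl (subst c y e) p (Var w))"
      by (rule freefor_disj) (use BV_repl[of "subst c y e" p "Var w"] sub.prems in auto)
    show ?thesis unfolding eq using key ff by (auto intro: AH.sub AH_var)
  qed
qed

fun reps :: "nat \<Rightarrow> 'p fm \<Rightarrow> bool list list \<Rightarrow> 'p fm" where
  "reps z f [] = f"
| "reps z f (p#ps) = reps z (repl f p (Var z)) ps"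

lemma reps_app: "reps z f (ps1 @ ps2) = reps z (reps z f ps1) ps2"
  by (induction ps1 arbitrary: f) auto

lemma reps_AndL: "reps z (And a b) (map (Cons False) ps) = And (reps z a ps) b"
  by (induction ps arbitrary: a) auto
lemma reps_AndR: "reps z (And a b) (map (Cons True) ps) = And a (reps z b ps)"
  by (induction ps arbitrary: b) auto
lemma reps_OrL: "reps z (Or a b) (map (Cons False) ps) = Or (reps z a ps) b"
  by (induction ps arbitrary: a) auto
lemma reps_OrR: "reps z (Or a b) (map (Cons True) ps) = Or a (reps z b ps)"
  by (induction ps arbitrary: b) auto
lemma reps_Dia: "reps z (Dia a) (map (Cons False) ps) = Dia (reps z a ps)"
  by (induction ps arbitrary: a) auto
lemma reps_Box: "reps z (Box a) (map (Cons False) ps) = Box (reps z a ps)"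
  by (induction ps arbitrary: a) auto
lemma reps_Mu: "reps z (Mu x a) (map (Cons False) ps) = Mu x (reps z a ps)"
  by (induction ps arbitrary: a) auto
lemma reps_Nu: "reps z (Nu x a) (map (Cons False) ps) = Nu x (reps z a ps)"
  by (induction ps arbitrary: a) auto

lemma len_pos: "len f \<ge> 1" by (cases f) auto

lemma len_repl: "len (repl f p (Var z)) \<le> len f"
  by (induction f arbitrary: p) (case_tac p; force simp: len_pos)+

lemma len_reps: "len (reps z f ps) \<le> len f"
  by (induction ps arbitrary: f) (auto intro: le_trans[OF _ len_repl])

lemma AH_reps: "AH eta n f \<Longrightarrow> z \<notin> BV f \<Longrightarrow> AH eta n (reps z f ps)"
proof (induction ps arbitrary: f)
  case (Cons p ps)
  have "z \<notin> BV (repl f p (Var z))" using BV_repl[of f p "Var z"] Cons.prems by auto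
  moreover have "AH eta n (repl f p (Var z))" using M Cons.prems by blast
  ultimately show ?case using Cons.IH by simp
qed simp

fun abstr :: "'p fm \<Rightarrow> nat \<Rightarrow> 'p fm \<Rightarrow> 'p fm" where
  "abstr xi z (And a b) = (if And a b = xi then Var z else And (abstr xi z a) (abstr xi z b))"
| "abstr xi z (Or a b) = (if Or a b = xi then Var z else Or (abstr xi z a) (abstr xi z b))"
| "abstr xi z (Dia a) = (if Dia a = xi then Var z else Dia (abstr xi z a))"
| "abstr xi z (Box a) = (if Box a = xi then Var z else Box (abstr xi z a))"
| "abstr xi z (Mu x a) = (if Mu x a = xi then Var z else Mu x (abstr xi z a))"
| "abstr xi z (Nu x a) = (if Nu x a = xi then Var z else Nu x (abstr xi z a))"
| "abstr xi z f = (if f = xi then Var z else f)"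

lemma abstr_self[simp]: "abstr xi z xi = Var z"
  by (cases xi) auto

lemma reps_helper: "A = reps z f [[]] \<or> A = reps z f [] \<Longrightarrow> \<exists>ps. A = reps z f ps"
  by blast

lemma abstr_reps: "\<exists>ps. abstr xi z f = reps z f ps"
proof (induction f)
  case (And a b)
  then obtain pa pb where "abstr xi z a = reps z a pa" "abstr xi z b = reps z b pb" by blast
  note h = this
  show ?case
  proof (cases "(And a b) = xi")
    case True thus ?thesis by (intro exI[of _ "[[]]"]) simp
  next
    case False thus ?thesis using h by (intro exI[of _ "map (Cons False) pa @ map (Cons True) pb"]) (simp add: reps_app reps_AndL reps_AndR)
  qed
next
  case (Or a b)
  then obtain pa pb where "abstr xi z a = reps z a pa" "abstr xi z b = reps z b pb" by blast
  note h = this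
  show ?case
  proof (cases "(Or a b) = xi")
    case True thus ?thesis by (intro exI[of _ "[[]]"]) simp
  next
    case False thus ?thesis using h by (intro exI[of _ "map (Cons False) pa @ map (Cons True) pb"]) (simp add: reps_app reps_OrL reps_OrR)
  qed
next
  case (Dia a)
  then obtain pa where "abstr xi z a = reps z a pa" by blast
  note h = this
  show ?case
  proof (cases "(Dia a) = xi")
    case True thus ?thesis by (intro exI[of _ "[[]]"]) simp
  next
    case False thus ?thesis using h by (intro exI[of _ "map (Cons False) pa"]) (simp add: reps_Dia)
  qed
next
  case (Box a)
  then obtain pa where "abstr xi z a = reps z a pa" by blast
  note h = this
  show ?case
  proof (cases "(Box a) = xi")
    case True thus ?thesis by (intro exI[of _ "[[]]"]) simp
  next
    case False thus ?thesis using h by (intro exI[of _ "map (Cons False) pa"]) (simp add: reps_Box)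
  qed
next
  case (Mu x a)
  then obtain pa where "abstr xi z a = reps z a pa" by blast
  note h = this
  show ?case
  proof (cases "(Mu x a) = xi")
    case True thus ?thesis by (intro exI[of _ "[[]]"]) simp
  next
    case False thus ?thesis using h by (intro exI[of _ "map (Cons False) pa"]) (simp add: reps_Mu)
  qed
next
  case (Nu x a)
  then obtain pa where "abstr xi z a = reps z a pa" by blast
  note h = this
  show ?case
  proof (cases "(Nu x a) = xi")
    case True thus ?thesis by (intro exI[of _ "[[]]"]) simp
  next
    case False thus ?thesis using h by (intro exI[of _ "map (Cons False) pa"]) (simp add: reps_Nu)
  qed
qed (rule reps_helper, simp)+

lemma abstr_subst_reps: "\<exists>ps. abstr xi z (subst chi x xi) = reps z chi ps"
proof (induction chi)
  case (And a b)
  then obtain pa pb where "abstr xi z (subst a x xi) = reps z a pa" "abstr xi z (subst b x xi) = reps z b pb" by blast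
  note h = this
  show ?case
  proof (cases "subst (And a b) x xi = xi")
    case True thus ?thesis by (intro exI[of _ "[[]]"]) simp
  next
    case False thus ?thesis using h by (intro exI[of _ "map (Cons False) pa @ map (Cons True) pb"]) (simp add: reps_app reps_AndL reps_AndR)
  qed
next
  case (Or a b)
  then obtain pa pb where "abstr xi z (subst a x xi) = reps z a pa" "abstr xi z (subst b x xi) = reps z b pb" by blast
  note h = this
  show ?case
  proof (cases "subst (Or a b) x xi = xi")
    case True thus ?thesis by (intro exI[of _ "[[]]"]) simp
  next
    case False thus ?thesis using h by (intro exI[of _ "map (Cons False) pa @ map (Cons True) pb"]) (simp add: reps_app reps_OrL reps_OrR)
  qed
next
  case (Dia a)
  then obtain pa where "abstr xi z (subst a x xi) = reps z a pa" by blast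
  note h = this
  show ?case
  proof (cases "subst (Dia a) x xi = xi")
    case True thus ?thesis by (intro exI[of _ "[[]]"]) simp
  next
    case False thus ?thesis using h by (intro exI[of _ "map (Cons False) pa"]) (simp add: reps_Dia)
  qed
next
  case (Box a)
  then obtain pa where "abstr xi z (subst a x xi) = reps z a pa" by blast
  note h = this
  show ?case
  proof (cases "subst (Box a) x xi = xi")
    case True thus ?thesis by (intro exI[of _ "[[]]"]) simp
  next
    case False thus ?thesis using h by (intro exI[of _ "map (Cons False) pa"]) (simp add: reps_Box)
  qed
next
  case (Mu y a)
  then obtain pa where "abstr xi z (subst a x xi) = reps z a pa" by blast
  moreover obtain pb where "abstr xi z a = reps z a pb" using abstr_reps by blast
  ultimately have h: "abstr xi z (subst a x xi) = reps z a pa" "abstr xi z a = reps z a pb" by auto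
  show ?case
  proof (cases "subst (Mu y a) x xi = xi")
    case True thus ?thesis by (intro exI[of _ "[[]]"]) simp
  next
    case False
    show ?thesis
    proof (cases "y = x")
      case True thus ?thesis using h False by (intro exI[of _ "map (Cons False) pb"]) (simp add: reps_Mu)
    next
      case False thus ?thesis using h \<open>subst (Mu y a) x xi \<noteq> xi\<close> by (intro exI[of _ "map (Cons False) pa"]) (simp add: reps_Mu)
    qed
  qed
next
  case (Nu y a)
  then obtain pa where "abstr xi z (subst a x xi) = reps z a pa" by blast
  moreover obtain pb where "abstr xi z a = reps z a pb" using abstr_reps by blast
  ultimately have h: "abstr xi z (subst a x xi) = reps z a pa" "abstr xi z a = reps z a pb" by auto
  show ?case
  proof (cases "subst (Nu y a) x xi = xi")
    case True thus ?thesis by (intro exI[of _ "[[]]"]) simp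
  next
    case False
    show ?thesis
    proof (cases "y = x")
      case True thus ?thesis using h False by (intro exI[of _ "map (Cons False) pb"]) (simp add: reps_Nu)
    next
      case False thus ?thesis using h \<open>subst (Nu y a) x xi \<noteq> xi\<close> by (intro exI[of _ "map (Cons False) pa"]) (simp add: reps_Nu)
    qed
  qed
qed (rule reps_helper, simp)+

lemma abstr_back: "z \<notin> FV f \<Longrightarrow> z \<notin> BV f \<Longrightarrow> subst (abstr xi z f) z xi = f"
proof (induction f)
  case (Var v)
  show ?case
  proof (cases "Var v = xi")
    case True
    have "abstr xi z (Var v) = Var z" using True by (metis abstr_self)
    then show ?thesis using True by simp
  next
    case False
    then show ?thesis using Var by simp
  qed
qed auto

lemma abstr_BV: "BV (abstr xi z f) \<subseteq> BV f"
  by (induction f) auto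
lemma abstr_FV: "FV (abstr xi z f) \<subseteq> FV f \<union> {z}"
  by (induction f) auto

lemma abstr_same: "z \<notin> BV f \<Longrightarrow> abstr xi z f = f \<or> z \<in> FV (abstr xi z f)"
  by (induction f) auto

fun subs :: "'p fm \<Rightarrow> 'p fm set" where
  "subs (And a b) = insert (And a b) (subs a \<union> subs b)"
| "subs (Or a b) = insert (Or a b) (subs a \<union> subs b)"
| "subs (Dia a) = insert (Dia a) (subs a)"
| "subs (Box a) = insert (Box a) (subs a)"
| "subs (Mu x a) = insert (Mu x a) (subs a)"
| "subs (Nu x a) = insert (Nu x a) (subs a)"
| "subs f = {f}"

lemma subs_self: "f \<in> subs f" by (cases f) auto

lemma subs_subst: "y \<in> FV c \<Longrightarrow> e \<in> subs (subst c y e)"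
  by (induction c) (auto simp: subs_self)

lemma subs_BV: "g \<in> subs f \<Longrightarrow> BV g \<subseteq> BV f"
  by (induction f) auto

lemma subs_abstr: "subs (abstr xi z f) \<subseteq> {abstr xi z g | g. g \<in> subs f}"
proof (induction f)
qed (auto simp: subs_self, (metis abstr_self abstr.simps)+)

lemma abstr_ne: "z \<notin> BV f \<Longrightarrow> z \<notin> FV xi \<Longrightarrow> len xi > 1 \<Longrightarrow> abstr xi z f \<noteq> xi"
proof
  assume a: "z \<notin> BV f" "z \<notin> FV xi" "len xi > 1" and eq: "abstr xi z f = xi"
  from abstr_same[OF a(1), of xi] show False
  proof
    assume "abstr xi z f = f"
    hence "f = xi" using eq by simp
    hence "abstr xi z f = Var z" by simp
    thus False using eq a by auto
  next
    assume "z \<in> FV (abstr xi z f)" thus False using eq a by simp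
  qed
qed

lemma abstr_nosub: "z \<notin> BV f \<Longrightarrow> z \<notin> FV xi \<Longrightarrow> len xi > 1 \<Longrightarrow> xi \<notin> subs (abstr xi z f)"
  using subs_abstr[of xi z f] subs_BV abstr_ne by fastforce

lemma AH_mono: assumes "AH eta k f" "k \<le> k'" shows "AH eta k' f"
  using assms(2,1) by (induction k' rule: dec_induct) (auto intro: AH.up)

lemma ex_level: "\<exists>k. AH eta k f"
proof (induction f arbitrary: eta)
  case (And a b)
  then obtain ka kb where "AH eta ka a" "AH eta kb b" by blast
  then show ?case using AH_mono[of eta ka a "max ka kb"] AH_mono[of eta kb b "max ka kb"]
    by (auto intro: AH.conj)
next
  case (Or a b)
  then obtain ka kb where "AH eta ka a" "AH eta kb b" by blast
  then show ?case using AH_mono[of eta ka a "max ka kb"] AH_mono[of eta kb b "max ka kb"]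
    by (auto intro: AH.disj)
next
  case (Dia a) then show ?case by (auto intro: AH.dia)
next
  case (Box a) then show ?case by (auto intro: AH.box)
next
  case (Mu x a)
  obtain k where "AH NuOp k a" using Mu by blast
  hence h: "AH NuOp k (Mu x a)" using AH.fix_dual[of NuOp k a x] by simp
  show ?case
  proof (cases eta)
    case MuOp then show ?thesis using AH.up[OF h] by blast
  next
    case NuOp then show ?thesis using h by blast
  qed
next
  case (Nu x a)
  obtain k where "AH MuOp k a" using Nu by blast
  hence h: "AH MuOp k (Nu x a)" using AH.fix_dual[of MuOp k a x] by simp
  show ?case
  proof (cases eta)
    case NuOp then show ?thesis using AH.up[OF h] by blast
  next
    case MuOp then show ?thesis using h by blast
  qed
qed (rule exI[of _ 0], rule AH.atom, simp)+

theorem mainTheorem10: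
  fixes \<xi> \<chi> :: "'p fm" and x :: nat
  assumes "freefor \<xi> x \<chi>" and "x \<in> FV \<chi>" and "len \<xi> > 1" and "tidy (subst \<chi> x \<xi>)"
  shows "\<exists>\<chi>' x'. tidy \<chi>' \<and> freefor \<xi> x' \<chi>' \<and> subst \<chi>' x' \<xi> = subst \<chi> x \<xi>
           \<and> len \<chi>' \<le> len \<chi> \<and> (\<forall>eta. ad eta \<chi>' \<le> ad eta \<chi>) \<and> \<not> free_sub \<xi> \<chi>'"
proof -
  let ?phi = "subst \<chi> x \<xi>"
  let ?V = "FV ?phi \<union> BV ?phi \<union> FV \<xi> \<union> BV \<xi>"
  have finV: "finite ?V" by (simp add: fin_FV fin_BV)
  obtain z where z: "z \<notin> ?V" using ex_new_if_finite[OF infinite_UNIV_nat finV] by blast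
  define chi' where "chi' = abstr \<xi> z ?phi"
  have tphi: "FV ?phi \<inter> BV ?phi = {}" using assms(4) unfolding tidy_def .
  have fvxi: "FV \<xi> \<subseteq> FV ?phi" using FV_subst2 assms(1,2) by blast
  have zchi: "z \<notin> BV \<chi>" using z BV_subst1[of \<chi> x \<xi>] by auto
  have t: "tidy chi'" unfolding tidy_def chi'_def
    using abstr_FV[of \<xi> z ?phi] abstr_BV[of \<xi> z ?phi] tphi z by auto
  have ff: "freefor \<xi> z chi'" unfolding chi'_def
    by (rule freefor_disj) (use abstr_BV[of \<xi> z ?phi] tphi fvxi in auto)
  have bk: "subst chi' z \<xi> = ?phi" unfolding chi'_def by (rule abstr_back) (use z in auto)
  obtain ps where ps: "chi' = reps z \<chi> ps" unfolding chi'_def using abstr_subst_reps by blast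
  have ln: "len chi' \<le> len \<chi>" unfolding ps by (rule len_reps)
  have adl: "ad eta chi' \<le> ad eta \<chi>" for eta
  proof -
    have "AH eta (ad eta \<chi>) \<chi>" unfolding ad_def by (rule LeastI_ex) (rule ex_level)
    hence "AH eta (ad eta \<chi>) chi'" unfolding ps using AH_reps zchi by blast
    thus ?thesis unfolding ad_def by (rule Least_le)
  qed
  have nfs: "\<not> free_sub \<xi> chi'"
  proof
    assume "free_sub \<xi> chi'"
    then obtain c y where "chi' = subst c y \<xi>" "y \<in> FV c" unfolding free_sub_def by blast
    hence "\<xi> \<in> subs chi'" using subs_subst by metis
    moreover have "\<xi> \<notin> subs chi'" unfolding chi'_def by (rule abstr_nosub) (use z assms(3) in auto)
    ultimately show False by blast
  qed
  show ?thesis using t ff bk ln adl nfs by blast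
qed

end
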